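(* For all nonnegative integers $s$ and $n$, $$\det\Big(W^*_{m,r}[s+i+j,\,s+j]_q\Big)_{0\le i,j\le n}=\prod_{k=0}^{n}[m(s+k)+r]_q^{\,k}.$$
   Context: Fix a real number $q>0$ with $q\neq 1$, a positive integer $m$ and a complex number $r$. For complex $x$ put $q^x=e^{x\ln q}$ and $[x]_q=\frac{1-q^x}{1-q}$. The numbers $W_{m,r}[n,k]_q$, for integers $n,k$, are defined by $W_{m,r}[0,0]_q=1$, $W_{m,r}[n,k]_q=0$ whenever $n<k$ or $n<0$ or $k<0$, and, for $n\ge 1$ and $0\le k\le n$, $$W_{m,r}[n,k]_q=q^{m(k-1)+r}\,W_{m,r}[n-1,k-1]_q+[mk+r]_q\,W_{m,r}[n-1,k]_q .$$ Further, $W^*_{m,r}[n,k]_q=q^{-m\binom{k}{2}-kr}\,W_{m,r}[n,k]_q$ for $n,k\ge 0$. *)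

theory Defs
  imports Complex_Main "Jordan_Normal_Form.Determinant"
begin

definition qpow :: "real \<Rightarrow> complex \<Rightarrow> complex" where
  "qpow q x = exp (x * complex_of_real (ln q))"

definition qnum :: "real \<Rightarrow> complex \<Rightarrow> complex" where
  "qnum q x = (1 - qpow q x) / (1 - complex_of_real q)"

fun W :: "real \<Rightarrow> nat \<Rightarrow> complex \<Rightarrow> nat \<Rightarrow> nat \<Rightarrow> complex" where
  "W q m r 0 k = (if k = 0 then 1 else 0)"
| "W q m r (Suc n) k =
     (if k > Suc n then 0
      else (if k = 0 then 0
            else qpow q (of_int (int m * (int k - 1)) + r) * W q m r n (k - 1))
           + qnum q (of_nat (m * k) + r) * W q m r n k)"

definition Wstar :: "real \<Rightarrow> nat \<Rightarrow> complex \<Rightarrow> nat \<Rightarrow> nat \<Rightarrow> complex" where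
  "Wstar q m r n k = qpow q (- (of_nat (m * (k choose 2)) + of_nat k * r)) * W q m r n k"

end

theory Submission
  imports Defs
begin


lemma sum_bidiag:
  fixes g :: "nat \<Rightarrow> 'a::comm_ring_1"
  assumes "j < N"
  shows "(\<Sum>k<N. g k * (if k = j then 1 else if Suc k = j then -1 else 0))
    = g j - (if j > 0 then g (j - 1) else 0)"
proof -
  have "(\<Sum>k<N. g k * (if k = j then 1 else if Suc k = j then -1 else 0))
     = (\<Sum>k<N. (if k = j then g k else 0)) - (\<Sum>k<N. (if k = j - 1 \<and> j > 0 then g k else 0))"
    unfolding sum_subtractf[symmetric] by (rule sum.cong) auto
  also have "\<dots> = g j - (if j > 0 then g (j - 1) else 0)"
    using assms by (auto simp: sum.delta)
  finally show ?thesis .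
qed

lemma det_abstract:
  fixes b :: "nat \<Rightarrow> nat \<Rightarrow> 'a::comm_ring_1" and a :: "nat \<Rightarrow> 'a"
  assumes rec: "\<And>N K. b (Suc N) (Suc K) = b N K + a (Suc K) * b N (Suc K)"
    and dg: "\<And>K. b K K = 1"
  shows "det (mat (Suc n) (Suc n) (\<lambda>(i, j). b (s + i + j) (s + j))) = (\<Prod>k = 0..n. a (s + k) ^ k)"
proof (induction n arbitrary: s)
  case 0
  show ?case by (subst det_single) (auto simp: dg)
next
  case (Suc n)
  define M where "M = mat (Suc (Suc n)) (Suc (Suc n)) (\<lambda>(i, j). b (s + i + j) (s + j))"
  define U :: "'a mat" where "U = mat (Suc (Suc n)) (Suc (Suc n)) (\<lambda>(k, j). if k = j then 1 else if Suc k = j then -1 else 0)"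
  define N where "N = mat (Suc (Suc n)) (Suc (Suc n)) (\<lambda>(i, j). if j = 0 then b (s+i) s else if i = 0 then 0
        else a (s + j) * b (s + i + j - 1) (s + j))"
  have MC: "M \<in> carrier_mat (Suc (Suc n)) (Suc (Suc n))" and UC: "U \<in> carrier_mat (Suc (Suc n)) (Suc (Suc n))"
    unfolding M_def U_def by auto
  have detU: "det U = 1"
    by (subst det_upper_triangular[OF _ UC]) (auto simp: U_def upper_triangular_def prod_list_diag_prod)
  have MU: "M * U = N"
  proof (rule eq_matI)
    fix i j assume i: "i < dim_row N" and j: "j < dim_col N"
    have "(M * U) $$ (i, j) = (\<Sum>k<Suc (Suc n). M $$ (i,k) * (if k = j then 1 else if Suc k = j then -1 else 0))"
      using i j unfolding M_def U_def N_def by (auto simp: scalar_prod_def lessThan_atLeast0 intro!: sum.cong)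
    also have "\<dots> = M $$ (i, j) - (if j > 0 then M $$ (i, j - 1) else 0)"
      using j unfolding N_def by (intro sum_bidiag) auto
    also have "\<dots> = N $$ (i, j)"
    proof (cases j)
      case 0 then show ?thesis using i j by (simp add: M_def N_def)
    next
      case (Suc j')
      show ?thesis
      proof (cases i)
        case 0 then show ?thesis using i j Suc by (simp add: M_def N_def dg)
      next
        case (Suc i')
        have "b (s + i + j) (s + j) = b (Suc (s + i + j')) (Suc (s+j'))" using \<open>j = Suc j'\<close> by simp
        also have "\<dots> = b (s + i + j') (s + j') + a (Suc (s+j')) * b (s + i + j') (Suc (s+j'))" by (rule rec)
        finally show ?thesis using i j Suc \<open>j = Suc j'\<close> by (simp add: M_def N_def)
      qed
    qed
    finally show "(M * U) $$ (i, j) = N $$ (i, j)" .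
  qed (auto simp: M_def U_def N_def)
  define M' where "M' = mat (Suc n) (Suc n) (\<lambda>(i, j). b (Suc s + i + j) (Suc s + j))"
  define Dg :: "'a mat" where "Dg = mat (Suc n) (Suc n) (\<lambda>(i, j). if i = j then a (Suc s + i) else 0)"
  have del: "mat_delete N 0 0 = M' * Dg"
  proof (rule eq_matI)
    fix i j assume i: "i < dim_row (M' * Dg)" and j: "j < dim_col (M' * Dg)"
    have "(M' * Dg) $$ (i, j) = (\<Sum>k<Suc n. M' $$ (i,k) * (if k = j then a (Suc s + k) else 0))"
      using i j unfolding M'_def Dg_def by (auto simp: scalar_prod_def lessThan_atLeast0 intro!: sum.cong)
    also have "\<dots> = M' $$ (i, j) * a (Suc s + j)"
      using j by (simp add: if_distrib[of "\<lambda>x. _ * x"] sum.delta cong: if_cong) (auto simp: M'_def Dg_def)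
    finally show "mat_delete N 0 0 $$ (i, j) = (M' * Dg) $$ (i, j)"
      using i j by (simp add: mat_delete_def N_def M'_def Dg_def)
  qed (auto simp: mat_delete_def N_def M'_def Dg_def)
  have NC: "N \<in> carrier_mat (Suc (Suc n)) (Suc (Suc n))" unfolding N_def by auto
  have "det N = (\<Sum>j<Suc (Suc n). N $$ (0,j) * cofactor N 0 j)"
    by (rule laplace_expansion_row[OF NC]) simp
  also have "\<dots> = N $$ (0,0) * cofactor N 0 0"
    by (subst sum.remove[of _ 0]) (auto simp: N_def intro!: sum.neutral)
  also have "\<dots> = det (M' * Dg)"
    using del by (simp add: cofactor_def) (simp add: N_def dg)
  also have "\<dots> = det M' * det Dg"
    by (rule det_mult) (auto simp: M'_def Dg_def)
  also have "det Dg = (\<Prod>k<Suc n. a (Suc s + k))"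
    by (subst det_upper_triangular[of _ "Suc n"]) 
       (auto simp: Dg_def upper_triangular_def prod_list_diag_prod lessThan_atLeast0)
  also have "det M' = (\<Prod>k = 0..n. a (Suc s + k) ^ k)"
    unfolding M'_def using Suc.IH[of "Suc s"] by simp
  finally have dN: "det N = (\<Prod>k = 0..n. a (Suc s + k) ^ k) * (\<Prod>k<Suc n. a (Suc s + k))" .
  have "det M = det N"
    using det_mult[OF MC UC] detU MU by simp
  also have "\<dots> = (\<Prod>k = 0..Suc n. a (s + k) ^ k)"
    unfolding dN prod.atLeast0_atMost_Suc_shift
    by (simp add: atLeast0AtMost lessThan_Suc_atMost prod.distrib[symmetric] mult.commute)
  finally show ?case unfolding M_def .
qed


lemma W_zero: "N < K \<Longrightarrow> W q m r N K = 0"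
  by (induction N arbitrary: K) auto

lemma qpow_add: "qpow q x * qpow q y = qpow q (x + y)"
  unfolding qpow_def by (simp add: exp_add[symmetric] distrib_right)

lemma Wstar_rec:
  "Wstar q m r (Suc N) (Suc K) = Wstar q m r N K + qnum q (of_nat (m * Suc K) + r) * Wstar q m r N (Suc K)"
proof (cases "Suc K > Suc N")
  case True
  then show ?thesis by (simp add: Wstar_def W_zero)
next
  case False
  have ch: "Suc K choose 2 = (K choose 2) + K"
    by (simp add: numeral_2_eq_2)
  have e: "qpow q (- (of_nat (m * (Suc K choose 2)) + of_nat (Suc K) * r)) *
      qpow q (of_int (int m * (int (Suc K) - 1)) + r) = qpow q (- (of_nat (m * (K choose 2)) + of_nat K * r))"
    unfolding qpow_add ch by (simp add: algebra_simps)
  have "Wstar q m r (Suc N) (Suc K) =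
     qpow q (- (of_nat (m * (Suc K choose 2)) + of_nat (Suc K) * r)) *
      qpow q (of_int (int m * (int (Suc K) - 1)) + r) * W q m r N K
     + qnum q (of_nat (m * Suc K) + r) * Wstar q m r N (Suc K)"
    using False by (simp add: Wstar_def algebra_simps)
  then show ?thesis unfolding e by (simp add: Wstar_def)
qed

lemma Wstar_diag: "Wstar q m r K K = 1"
proof (induction K)
  case 0 then show ?case by (simp add: Wstar_def qpow_def numeral_2_eq_2)
next
  case (Suc K)
  have "Wstar q m r K (Suc K) = 0" by (simp add: Wstar_def W_zero)
  with Suc show ?case by (simp only: Wstar_rec) simp
qed

theorem theorem7:
  fixes q :: real and m s n :: nat and r :: complex
  assumes "q > 0" and "q \<noteq> 1" and "m > 0"
  shows "det (mat (Suc n) (Suc n) (\<lambda>(i, j). Wstar q m r (s + i + j) (s + j)))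
         = (\<Prod>k = 0..n. qnum q (of_nat (m * (s + k)) + r) ^ k)"
  by (rule det_abstract[of "Wstar q m r" "\<lambda>K. qnum q (of_nat (m * K) + r)"])
     (auto simp: Wstar_rec Wstar_diag)

end
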